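(* For $i=1,2$, let $l^i,u^i,\hbar^i$ satisfy the standing assumptions below with the same constants $C_\hbar,\underline{c},\overline{c}$, let $\overline{Y}^i\in C^1_G(0,T)$ with $l^i_T\le\hat{\mathbb{E}}[\hbar^i(T,\overline{Y}^i_T)]\le u^i_T$, and let $(Y^i,R^i)\in C^1_G(0,T)\times C^T_B$ be the solution of the backward Skorokhod problem with sublinear expectation associated to $\overline{Y}^i,\hbar^i$ and barriers $l^i,u^i$. Then for any $t\in[0,T]$, $$\begin{aligned}|(R^1_T-R^1_t)-(R^2_T-R^2_t)|&\le\sup_{s\in[t,T]}|\hat{\mathbb{E}}[\overline{Y}^1_s]-\hat{\mathbb{E}}[\overline{Y}^2_s]|+\frac{2\overline{c}}{\underline{c}}\sup_{s\in[t,T]}\hat{\mathbb{E}}[|\overline{Y}^1_s-\overline{Y}^2_s|]\\&\quad+\frac1{\underline{c}}\Big\{\sup_{s\in[t,T]}\max\big[|\overline{H}^1(s,L^1_s(\overline{Y}^2_s),\overline{Y}^2_s)-\overline{H}^2(s,L^1_s(\overline{Y}^2_s),\overline{Y}^2_s)|,\ |\overline{H}^1(s,U^1_s(\overline{Y}^2_s),\overline{Y}^2_s)-\overline{H}^2(s,U^1_s(\overline{Y}^2_s),\overline{Y}^2_s)|\big]\\&\qquad\qquad+\sup_{s\in[t,T]}\max(|l^1_s-l^2_s|,|u^1_s-u^2_s|)\Big\}.\end{aligned}$$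
   Context: Setting: $\hat{\mathbb{E}}$ is the $G$-expectation on $\Omega_T=\{\omega\in C([0,T];\mathbb{R}^d):\omega_0=0\}$; $L^1_G(\Omega_t)$ the completion of bounded Lipschitz cylinder functionals of the canonical process up to $t$ under $\hat{\mathbb{E}}|\cdot|$; $C^1_G(0,T)$ the processes $Y$ with $Y_v\in L^1_G(\Omega_v)$ and $v\mapsto Y_v$ continuous in $\hat{\mathbb{E}}|\cdot|$; $C^T_B$ the deterministic continuous functions on $[0,T]$ of bounded variation starting at $0$. Standing assumptions on $(l,u,\hbar)$: $l,u$ bounded continuous on $[0,T]$ with $\inf_t(u_t-l_t)>0$; $\hbar:[0,T]\times\Omega_T\times\mathbb{R}\to\mathbb{R}$, $(t,y)\mapsto\hbar(t,y)$ uniformly continuous uniformly in $\omega$, strictly increasing in $y$, $\hbar(t,y)\in L^1_G(\Omega_T)$, $\hat{\mathbb{E}}[\lim_{y\downarrow-\infty}\hbar(t,y)]<\inf_sl_s<\sup_su_s<\hat{\mathbb{E}}[\lim_{y\uparrow\infty}\hbar(t,y)]$, $|\hbar(t,y)|\le C_\hbar(1+|y|)$, $\underline{c}|y-y'|\le|\hbar(t,y)-\hbar(t,y')|\le\overline{c}|y-y'|$. For $X\in L^1_G(\Omega_s)$: $\overline{H}^i(s,x,X)=\hat{\mathbb{E}}[\hbar^i(s,x+X-\hat{\mathbb{E}}[X])]$, $L^i_s(X)=(\overline{H}^i)^{-1}(s,\cdot,X)(l^i_s)$, $U^i_s(X)=(\overline{H}^i)^{-1}(s,\cdot,X)(u^i_s)$.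 $(Y,R)\in C^1_G(0,T)\times C^T_B$ solves the backward Skorokhod problem with sublinear expectation associated to $\overline{Y},\hbar,l,u$ if $Y_t=\overline{Y}_t+R_T-R_t$, $l_t\le\hat{\mathbb{E}}[\hbar(t,Y_t)]\le u_t$ for all $t$, and $\int_s^t(\hat{\mathbb{E}}[\hbar(v,Y_v)]-l_v)dR_v\le0$, $\int_s^t(\hat{\mathbb{E}}[\hbar(v,Y_v)]-u_v)dR_v\le0$ for $0\le s\le t\le T$ (such a solution exists and is unique). *)

theory Defs
  imports "HOL-Analysis.Analysis" "HOL-Library.Extended_Real"
begin

section \<open>Sublinear expectation (abstract rendering of the G-expectation)\<close>

definition sublinear_expectation :: "('w \<Rightarrow> real) set \<Rightarrow> (('w \<Rightarrow> real) \<Rightarrow> real) \<Rightarrow> bool" where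
  "sublinear_expectation HH E \<longleftrightarrow>
     (\<forall>c::real. (\<lambda>_. c) \<in> HH) \<and>
     (\<forall>X\<in>HH. \<forall>Y\<in>HH. (\<lambda>w. X w + Y w) \<in> HH) \<and>
     (\<forall>X\<in>HH. \<forall>a::real. (\<lambda>w. a * X w) \<in> HH) \<and>
     (\<forall>X\<in>HH. (\<lambda>w. \<bar>X w\<bar>) \<in> HH) \<and>
     (\<forall>X\<in>HH. \<forall>Y\<in>HH. (\<forall>w. X w \<le> Y w) \<longrightarrow> E X \<le> E Y) \<and>
     (\<forall>c::real. E (\<lambda>_. c) = c) \<and>
     (\<forall>X\<in>HH. \<forall>Y\<in>HH. E (\<lambda>w. X w + Y w) \<le> E X + E Y) \<and>
     (\<forall>X\<in>HH. \<forall>a::real. a \<ge> 0 \<longrightarrow> E (\<lambda>w. a * X w) = a * E X)"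

definition C1G :: "('w \<Rightarrow> real) set \<Rightarrow> (('w \<Rightarrow> real) \<Rightarrow> real) \<Rightarrow> real \<Rightarrow> (real \<Rightarrow> 'w \<Rightarrow> real) \<Rightarrow> bool" where
  "C1G HH E T Y \<longleftrightarrow>
     (\<forall>v\<in>{0..T}. Y v \<in> HH) \<and>
     (\<forall>v\<in>{0..T}. \<forall>\<epsilon>>0. \<exists>\<delta>>0. \<forall>v'\<in>{0..T}. \<bar>v' - v\<bar> < \<delta> \<longrightarrow>
         E (\<lambda>w. \<bar>Y v' w - Y v w\<bar>) < \<epsilon>)"

definition is_partition :: "real \<Rightarrow> real \<Rightarrow> nat \<Rightarrow> (nat \<Rightarrow> real) \<Rightarrow> bool" where
  "is_partition a b n p \<longleftrightarrow> p 0 = a \<and> p n = b \<and> (\<forall>i<n. p i < p (Suc i))"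

definition bounded_variation_on :: "real \<Rightarrow> real \<Rightarrow> (real \<Rightarrow> real) \<Rightarrow> bool" where
  "bounded_variation_on a b g \<longleftrightarrow>
     (\<exists>M. \<forall>n p. is_partition a b n p \<longrightarrow> (\<Sum>i<n. \<bar>g (p (Suc i)) - g (p i)\<bar>) \<le> M)"

definition CTB :: "real \<Rightarrow> (real \<Rightarrow> real) \<Rightarrow> bool" where
  "CTB T R \<longleftrightarrow> continuous_on {0..T} R \<and> bounded_variation_on 0 T R \<and> R 0 = 0"

definition has_RS_integral :: "(real \<Rightarrow> real) \<Rightarrow> (real \<Rightarrow> real) \<Rightarrow> real \<Rightarrow> real \<Rightarrow> real \<Rightarrow> bool" where
  "has_RS_integral f g a b I \<longleftrightarrow>
     (\<forall>\<epsilon>>0. \<exists>\<delta>>0. \<forall>n p \<xi>. is_partition a b n p \<and>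
        (\<forall>i<n. p (Suc i) - p i < \<delta> \<and> p i \<le> \<xi> i \<and> \<xi> i \<le> p (Suc i)) \<longrightarrow>
        \<bar>(\<Sum>i<n. f (\<xi> i) * (g (p (Suc i)) - g (p i))) - I\<bar> < \<epsilon>)"

text \<open>hbar :: time \<Rightarrow> sample point \<Rightarrow> y \<Rightarrow> real.\<close>

definition Hbar :: "(('w \<Rightarrow> real) \<Rightarrow> real) \<Rightarrow> (real \<Rightarrow> 'w \<Rightarrow> real \<Rightarrow> real) \<Rightarrow> real \<Rightarrow> real \<Rightarrow> ('w \<Rightarrow> real) \<Rightarrow> real" where
  "Hbar E h s x X = E (\<lambda>w. h s w (x + X w - E X))"

text \<open>L_s(X) = (Hbar(s,.,X))^{-1}(l_s), U_s(X) = (Hbar(s,.,X))^{-1}(u_s).\<close>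
definition Linv :: "(('w \<Rightarrow> real) \<Rightarrow> real) \<Rightarrow> (real \<Rightarrow> 'w \<Rightarrow> real \<Rightarrow> real) \<Rightarrow> (real \<Rightarrow> real) \<Rightarrow> real \<Rightarrow> ('w \<Rightarrow> real) \<Rightarrow> real" where
  "Linv E h l s X = (THE x. Hbar E h s x X = l s)"

definition standing_assms ::
  "('w \<Rightarrow> real) set \<Rightarrow> (('w \<Rightarrow> real) \<Rightarrow> real) \<Rightarrow> real \<Rightarrow> real \<Rightarrow> real \<Rightarrow> real \<Rightarrow>
   (real \<Rightarrow> real) \<Rightarrow> (real \<Rightarrow> real) \<Rightarrow> (real \<Rightarrow> 'w \<Rightarrow> real \<Rightarrow> real) \<Rightarrow> bool" where
  "standing_assms HH E T Ch cl cu l u h \<longleftrightarrow>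
     0 < cl \<and>
     continuous_on {0..T} l \<and> bounded (l ` {0..T}) \<and>
     continuous_on {0..T} u \<and> bounded (u ` {0..T}) \<and>
     (\<exists>\<delta>>0. \<forall>t\<in>{0..T}. u t - l t \<ge> \<delta>) \<and>
     (\<forall>\<epsilon>>0. \<exists>\<delta>>0. \<forall>w. \<forall>t\<in>{0..T}. \<forall>t'\<in>{0..T}. \<forall>y y'.
         \<bar>t - t'\<bar> < \<delta> \<and> \<bar>y - y'\<bar> < \<delta> \<longrightarrow> \<bar>h t w y - h t' w y'\<bar> < \<epsilon>) \<and>
     (\<forall>t\<in>{0..T}. \<forall>w. strict_mono (h t w)) \<and>
     (\<forall>t\<in>{0..T}. \<forall>y. (\<lambda>w. h t w y) \<in> HH) \<and>
     (\<forall>t\<in>{0..T}. \<forall>X\<in>HH. (\<lambda>w. h t w (X w)) \<in> HH) \<and>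
     (\<forall>t\<in>{0..T}. \<forall>w y. \<bar>h t w y\<bar> \<le> Ch * (1 + \<bar>y\<bar>)) \<and>
     (\<forall>t\<in>{0..T}. \<forall>w y y'. cl * \<bar>y - y'\<bar> \<le> \<bar>h t w y - h t w y'\<bar> \<and>
                           \<bar>h t w y - h t w y'\<bar> \<le> cu * \<bar>y - y'\<bar>)"

definition BSP_solution ::
  "('w \<Rightarrow> real) set \<Rightarrow> (('w \<Rightarrow> real) \<Rightarrow> real) \<Rightarrow> real \<Rightarrow> (real \<Rightarrow> 'w \<Rightarrow> real) \<Rightarrow>
   (real \<Rightarrow> 'w \<Rightarrow> real \<Rightarrow> real) \<Rightarrow> (real \<Rightarrow> real) \<Rightarrow> (real \<Rightarrow> real) \<Rightarrow>
   (real \<Rightarrow> 'w \<Rightarrow> real) \<Rightarrow> (real \<Rightarrow> real) \<Rightarrow> bool" where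
  "BSP_solution HH E T Ybar h l u Y R \<longleftrightarrow>
     C1G HH E T Y \<and> CTB T R \<and>
     (\<forall>t\<in>{0..T}. \<forall>w. Y t w = Ybar t w + R T - R t) \<and>
     (\<forall>t\<in>{0..T}. l t \<le> E (\<lambda>w. h t w (Y t w)) \<and> E (\<lambda>w. h t w (Y t w)) \<le> u t) \<and>
     (\<forall>s t. 0 \<le> s \<and> s \<le> t \<and> t \<le> T \<longrightarrow>
        (\<exists>I. has_RS_integral (\<lambda>v. E (\<lambda>w. h v w (Y v w)) - l v) R s t I \<and> I \<le> 0) \<and>
        (\<exists>I. has_RS_integral (\<lambda>v. E (\<lambda>w. h v w (Y v w)) - u v) R s t I \<and> I \<le> 0))"

end

theory Submission
  imports Defs
begin


lemma part_prepend:
  assumes "is_partition p q n P" "a < p"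
  shows "is_partition a q (Suc n) (\<lambda>k. if k = 0 then a else P (k - 1))"
    "(\<Sum>i<Suc n. \<bar>R ((\<lambda>k. if k = 0 then a else P (k - 1)) (Suc i)) - R ((\<lambda>k. if k = 0 then a else P (k - 1)) i)\<bar>)
     = \<bar>R p - R a\<bar> + (\<Sum>i<n. \<bar>R (P (Suc i)) - R (P i)\<bar>)"
proof -
  show "is_partition a q (Suc n) (\<lambda>k. if k = 0 then a else P (k - 1))"
    using assms unfolding is_partition_def
    by (auto simp: less_Suc_eq_0_disj)
  show "(\<Sum>i<Suc n. \<bar>R ((\<lambda>k. if k = 0 then a else P (k - 1)) (Suc i)) - R ((\<lambda>k. if k = 0 then a else P (k - 1)) i)\<bar>)
     = \<bar>R p - R a\<bar> + (\<Sum>i<n. \<bar>R (P (Suc i)) - R (P i)\<bar>)"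
    using assms unfolding is_partition_def
    by (simp add: sum.lessThan_Suc_shift del: sum.lessThan_Suc)
qed

lemma part_append:
  assumes "is_partition p q n P" "q < b"
  shows "is_partition p b (Suc n) (\<lambda>k. if k \<le> n then P k else b)"
    "(\<Sum>i<Suc n. \<bar>R ((\<lambda>k. if k \<le> n then P k else b) (Suc i)) - R ((\<lambda>k. if k \<le> n then P k else b) i)\<bar>)
     = (\<Sum>i<n. \<bar>R (P (Suc i)) - R (P i)\<bar>) + \<bar>R b - R q\<bar>"
proof -
  show "is_partition p b (Suc n) (\<lambda>k. if k \<le> n then P k else b)"
    using assms unfolding is_partition_def
    by (auto simp: less_Suc_eq)
  have "(\<Sum>i<n. \<bar>R ((\<lambda>k. if k \<le> n then P k else b) (Suc i)) - R ((\<lambda>k. if k \<le> n then P k else b) i)\<bar>)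
     = (\<Sum>i<n. \<bar>R (P (Suc i)) - R (P i)\<bar>)"
    by (rule sum.cong) auto
  then show "(\<Sum>i<Suc n. \<bar>R ((\<lambda>k. if k \<le> n then P k else b) (Suc i)) - R ((\<lambda>k. if k \<le> n then P k else b) i)\<bar>)
     = (\<Sum>i<n. \<bar>R (P (Suc i)) - R (P i)\<bar>) + \<bar>R b - R q\<bar>"
    using assms unfolding is_partition_def by simp
qed

lemma part_ext:
  fixes R :: "real \<Rightarrow> real" and V :: real
  assumes "is_partition p q n P" "0 \<le> p" "q \<le> T"
    and BV: "\<forall>n P. is_partition 0 T n P \<longrightarrow> (\<Sum>i<n. \<bar>R (P (Suc i)) - R (P i)\<bar>) \<le> V"
  shows "(\<Sum>i<n. \<bar>R (P (Suc i)) - R (P i)\<bar>) \<le> V"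
proof -
  have "\<exists>n' P'. is_partition 0 q n' P' \<and> (\<Sum>i<n. \<bar>R (P (Suc i)) - R (P i)\<bar>) \<le> (\<Sum>i<n'. \<bar>R (P' (Suc i)) - R (P' i)\<bar>)"
  proof (cases "p = 0")
    case True then show ?thesis using assms(1) by (intro exI[of _ n] exI[of _ P]) simp
  next
    case False
    then have "0 < p" using assms by simp
    from part_prepend(1)[OF assms(1) this] part_prepend(2)[OF assms(1) this, of R] show ?thesis by fastforce
  qed
  then obtain n' P' where 1: "is_partition 0 q n' P'" "(\<Sum>i<n. \<bar>R (P (Suc i)) - R (P i)\<bar>) \<le> (\<Sum>i<n'. \<bar>R (P' (Suc i)) - R (P' i)\<bar>)" by blast
  have "\<exists>n'' P''. is_partition 0 T n'' P'' \<and> (\<Sum>i<n'. \<bar>R (P' (Suc i)) - R (P' i)\<bar>) \<le> (\<Sum>i<n''. \<bar>R (P'' (Suc i)) - R (P'' i)\<bar>)"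
  proof (cases "q = T")
    case True then show ?thesis using 1 by (intro exI[of _ n'] exI[of _ P']) simp
  next
    case False
    then have "q < T" using assms by simp
    from part_append(1)[OF 1(1) this] part_append(2)[OF 1(1) this, of R] show ?thesis by fastforce
  qed
  then show ?thesis using 1 BV by (meson order_trans)
qed


lemma sum_shift_ivl: "(\<Sum>i\<in>{m..<m+n}. (g::nat\<Rightarrow>real) i) = (\<Sum>j<n. g (m+j))"
  by (induct n) auto

lemma RS_mono:
  fixes f R :: "real \<Rightarrow> real"
  assumes pq: "p < q"
    and fc: "continuous_on {p..q} f" and fpos: "\<forall>v\<in>{p..q}. 0 < f v"
    and BV: "\<forall>n P. is_partition p q n P \<longrightarrow> (\<Sum>i<n. \<bar>R (P (Suc i)) - R (P i)\<bar>) \<le> V"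
    and RS: "\<forall>s s'. p \<le> s \<and> s < s' \<and> s' \<le> q \<longrightarrow> (\<exists>I. has_RS_integral f R s s' I \<and> I \<le> 0)"
  shows "R q \<le> R p"
proof -
  obtain x0 where x0: "x0 \<in> {p..q}" "\<forall>y\<in>{p..q}. f x0 \<le> f y"
    using continuous_attains_inf[OF compact_Icc _ fc] pq by auto
  define c where "c = f x0"
  have c: "0 < c" "\<forall>v\<in>{p..q}. c \<le> f v" using x0 fpos c_def by auto
  have uc: "uniformly_continuous_on {p..q} f"
    using compact_uniformly_continuous[OF fc compact_Icc] .
  have V0: "0 \<le> V"
  proof -
    have "is_partition p q 1 (\<lambda>k. if k = 0 then p else q)" using pq by (simp add: is_partition_def)
    from BV[rule_format, OF this] show ?thesis by simp
  qed
  show ?thesis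
  proof (rule field_le_epsilon)
    fix e :: real assume e: "0 < e"
    define \<epsilon> where "\<epsilon> = e * c / (2 * (V + 1))"
    have \<epsilon>: "0 < \<epsilon>" using e c V0 by (simp add: \<epsilon>_def)
    obtain d0 where d0: "0 < d0" "\<forall>x\<in>{p..q}. \<forall>x'\<in>{p..q}. \<bar>x' - x\<bar> < d0 \<longrightarrow> \<bar>f x' - f x\<bar> < \<epsilon>"
      using uc \<epsilon> unfolding uniformly_continuous_on_def dist_real_def by metis
    obtain N :: nat where N: "(q - p) / d0 < N" using reals_Archimedean2 by blast
    have "0 < (q - p) / d0" using pq d0 by simp
    then have Npos: "0 < N" using N by linarith
    define h0 where "h0 = (q - p) / N"
    have h0: "0 < h0" "h0 < d0"
      using pq Npos N d0 by (auto simp: h0_def field_simps)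
    define \<eta> where "\<eta> = e * c / (2 * N)"
    have \<eta>: "0 < \<eta>" using e c Npos by (simp add: \<eta>_def)
    define s where "s i = p + real i * h0" for i
    have s0: "s 0 = p" and sN: "s N = q" using Npos by (auto simp: s_def h0_def)
    have sb: "p \<le> s i" "s i \<le> q" if "i \<le> N" for i
    proof -
      show "p \<le> s i" using h0 by (simp add: s_def)
      have "real i * h0 \<le> real N * h0" using that h0 by (simp add: mult_right_mono)
      then show "s i \<le> q" using Npos by (simp add: s_def h0_def)
    qed
    have slt: "s i < s (Suc i)" for i using h0 by (simp add: s_def algebra_simps)
    define Pr where "Pr i I \<delta> \<longleftrightarrow> I \<le> 0 \<and> 0 < \<delta> \<and> (\<forall>n P \<xi>. is_partition (s i) (s (Suc i)) n P \<and>
        (\<forall>j<n. P (Suc j) - P j < \<delta> \<and> P j \<le> \<xi> j \<and> \<xi> j \<le> P (Suc j)) \<longrightarrow>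
        \<bar>(\<Sum>j<n. f (\<xi> j) * (R (P (Suc j)) - R (P j))) - I\<bar> < \<eta>)" for i I \<delta>
    have ex: "\<exists>I \<delta>. Pr i I \<delta>" if "i < N" for i
    proof -
      have "\<exists>I. has_RS_integral f R (s i) (s (Suc i)) I \<and> I \<le> 0"
      proof -
        have "p \<le> s i" "s (Suc i) \<le> q" using sb[of i] sb[of "Suc i"] that by auto
        then show ?thesis using RS slt[of i] by blast
      qed
      then obtain I where I: "has_RS_integral f R (s i) (s (Suc i)) I" "I \<le> 0" by blast
      then show ?thesis using \<eta> unfolding has_RS_integral_def Pr_def by blast
    qed
    obtain I \<delta> where IPr: "\<And>i. i < N \<Longrightarrow> Pr i (I i) (\<delta> i)"
      using ex by metis
    note I\<delta> = IPr[unfolded Pr_def]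
    define \<delta>m where "\<delta>m = Min (\<delta> ` {..<N})"
    have \<delta>m: "0 < \<delta>m" "\<And>i. i < N \<Longrightarrow> \<delta>m \<le> \<delta> i"
    proof -
      show "0 < \<delta>m" unfolding \<delta>m_def by (subst Min_gr_iff) (use Npos I\<delta> in auto)
      show "\<And>i. i < N \<Longrightarrow> \<delta>m \<le> \<delta> i" unfolding \<delta>m_def by (rule Min_le) auto
    qed
    obtain M :: nat where M: "h0 / \<delta>m < M" using reals_Archimedean2 by blast
    have "0 < h0 / \<delta>m" using h0 \<delta>m by simp
    then have Mpos: "0 < M" using M by linarith
    define h where "h = h0 / M"
    have h: "0 < h" "h < \<delta>m"
      using h0 Mpos M \<delta>m by (auto simp: h_def field_simps)
    define Q where "Q k = p + real k * h" for k
    have Qs: "Q (i * M) = s i" for i using Mpos by (simp add: Q_def s_def h_def)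
    have Qpart: "is_partition p q (N*M) Q"
      using Qs[of N] sN h by (auto simp: is_partition_def Q_def algebra_simps)
    define \<Delta> where "\<Delta> k = R (Q (Suc k)) - R (Q k)" for k
    define W where "W i = (\<Sum>j<M. \<bar>\<Delta> (i*M + j)\<bar>)" for i
    have piece: "R (s (Suc i)) - R (s i) \<le> (\<eta> + \<epsilon> * W i) / c" if iN: "i < N" for i
    proof -
      define P where "P j = Q (i*M + j)" for j
      have part: "is_partition (s i) (s (Suc i)) M P"
        using Qs[of i] Qs[of "Suc i"] h by (auto simp: is_partition_def P_def Q_def algebra_simps)
      have mesh: "\<forall>j<M. P (Suc j) - P j < \<delta> i \<and> P j \<le> P j \<and> P j \<le> P (Suc j)"
        using h \<delta>m(2)[OF iN] by (auto simp: P_def Q_def algebra_simps)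
      define S where "S = (\<Sum>j<M. f (P j) * (R (P (Suc j)) - R (P j)))"
      have SI: "\<bar>S - I i\<bar> < \<eta>"
        using I\<delta>[OF iN] part mesh unfolding S_def by blast
      have tel: "R (s (Suc i)) - R (s i) = (\<Sum>j<M. \<Delta> (i*M+j))"
      proof -
        have "(\<Sum>j<M. \<Delta> (i*M+j)) = (\<Sum>j<M. R (P (Suc j)) - R (P j))"
          by (simp add: \<Delta>_def P_def)
        also have "\<dots> = R (P M) - R (P 0)" by (rule sum_lessThan_telescope)
        also have "\<dots> = R (s (Suc i)) - R (s i)" using part by (simp add: is_partition_def)
        finally show ?thesis by simp
      qed
      define a where "a = f (s i)"
      have each: "a * \<Delta> (i*M+j) \<le> f (P j) * \<Delta> (i*M+j) + \<epsilon> * \<bar>\<Delta> (i*M+j)\<bar>" if jM: "j < M" for j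
      proof -
        have Pj: "P j \<in> {p..q}" "s i \<in> {p..q}"
        proof -
          have Pjeq: "P j = s i + real j * h" using Qs[of i] by (simp add: P_def Q_def algebra_simps)
          have "real j * h \<le> real M * h" using jM h by simp
          moreover have "real M * h = h0" using Mpos by (simp add: h_def)
          ultimately have "s i \<le> P j" "P j \<le> s (Suc i)"
            using Pjeq h by (auto simp: s_def algebra_simps)
          then show "P j \<in> {p..q}" "s i \<in> {p..q}" using sb[of i] sb[of "Suc i"] iN by auto
        qed
        have "\<bar>P j - s i\<bar> < d0"
        proof -
          have "P j - s i = real j * h" using Qs[of i] by (simp add: P_def Q_def algebra_simps)
          moreover have "real j * h < real M * h" using jM h by simp
          moreover have "real M * h = h0" using Mpos by (simp add: h_def)
          ultimately show ?thesis using h h0 by auto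
        qed
        then have "\<bar>f (P j) - a\<bar> < \<epsilon>" using d0(2) Pj by (auto simp: a_def)
        then have fa: "\<bar>a - f (P j)\<bar> \<le> \<epsilon>" by (simp add: abs_minus_commute)
        have "(a - f (P j)) * \<Delta> (i*M+j) \<le> \<bar>(a - f (P j)) * \<Delta> (i*M+j)\<bar>" by (rule abs_ge_self)
        also have "\<dots> = \<bar>a - f (P j)\<bar> * \<bar>\<Delta> (i*M+j)\<bar>" by (rule abs_mult)
        also have "\<dots> \<le> \<epsilon> * \<bar>\<Delta> (i*M+j)\<bar>" by (rule mult_right_mono[OF fa]) simp
        finally have "(a - f (P j)) * \<Delta> (i*M+j) \<le> \<epsilon> * \<bar>\<Delta> (i*M+j)\<bar>" .
        then show ?thesis by (simp add: algebra_simps)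
      qed
      have "a * (R (s (Suc i)) - R (s i)) = (\<Sum>j<M. a * \<Delta> (i*M+j))"
        by (simp add: tel sum_distrib_left)
      also have "\<dots> \<le> (\<Sum>j<M. f (P j) * \<Delta> (i*M+j) + \<epsilon> * \<bar>\<Delta> (i*M+j)\<bar>)"
        by (rule sum_mono) (use each in auto)
      also have "\<dots> = S + \<epsilon> * W i"
        by (simp add: S_def W_def sum.distrib sum_distrib_left \<Delta>_def P_def)
      finally have aR: "a * (R (s (Suc i)) - R (s i)) \<le> \<eta> + \<epsilon> * W i"
        using SI I\<delta>[OF iN] by linarith
      have ca: "c \<le> a" using c sb[of i] iN by (auto simp: a_def)
      have W0: "0 \<le> W i" by (simp add: W_def sum_nonneg)
      show ?thesis
      proof (cases "R (s (Suc i)) - R (s i) \<le> 0")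
        case True
        then show ?thesis using \<eta> \<epsilon> W0 c by (smt (verit) divide_nonneg_pos mult_nonneg_nonneg)
      next
        case False
        then have "c * (R (s (Suc i)) - R (s i)) \<le> \<eta> + \<epsilon> * W i"
          using aR ca by (smt (verit) mult_right_mono)
        then show ?thesis using c by (simp add: field_simps)
      qed
    qed
    have "R q - R p = (\<Sum>i<N. R (s (Suc i)) - R (s i))"
      using sum_lessThan_telescope[of "\<lambda>i. R (s i)" N] s0 sN by simp
    also have "\<dots> \<le> (\<Sum>i<N. (\<eta> + \<epsilon> * W i) / c)"
      by (rule sum_mono) (use piece in auto)
    also have "\<dots> = (real N * \<eta> + \<epsilon> * (\<Sum>i<N. W i)) / c"
      by (simp add: sum_divide_distrib[symmetric] sum.distrib sum_distrib_left)
    also have "(\<Sum>i<N. W i) = (\<Sum>k<N*M. \<bar>\<Delta> k\<bar>)"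
    proof -
      have "(\<Sum>i<N. W i) = (\<Sum>i<N. (\<Sum>k\<in>{i*M..<i*M+M}. \<bar>\<Delta> k\<bar>))"
        by (simp add: W_def sum_shift_ivl)
      also have "\<dots> = (\<Sum>k<N*M. \<bar>\<Delta> k\<bar>)" by (rule sum.nat_group)
      finally show ?thesis .
    qed
    also have "(\<Sum>k<N*M. \<bar>\<Delta> k\<bar>) \<le> V"
      using BV Qpart by (simp add: \<Delta>_def)
    then have "(real N * \<eta> + \<epsilon> * (\<Sum>k<N*M. \<bar>\<Delta> k\<bar>)) / c \<le> (real N * \<eta> + \<epsilon> * V) / c"
      using \<epsilon> c by (simp add: divide_right_mono mult_left_mono)
    also have "\<dots> = e / 2 + e * V / (2 * (V + 1))"
    proof -
      have V1: "V + 1 \<noteq> 0" "1 + V \<noteq> 0" using V0 by linarith+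
      have a1: "real N * \<eta> = e * c / 2" using Npos by (simp add: \<eta>_def)
      have a2: "\<epsilon> * V = c * (e * V / (2 * (V + 1)))" by (simp add: \<epsilon>_def)
      have "(real N * \<eta> + \<epsilon> * V) / c = (real N * \<eta>) / c + (\<epsilon> * V) / c"
        by (rule add_divide_distrib)
      also have "\<dots> = e / 2 + e * V / (2 * (V + 1))" unfolding a1 a2 using c by simp
      finally show ?thesis .
    qed
    also have "\<dots> \<le> e"
    proof -
      have "V / (V + 1) \<le> 1" using V0 by simp
      then have "e * (V / (V + 1)) \<le> e" by (rule mult_left_le) (use e in auto)
      moreover have "e * V / (2 * (V + 1)) = (e * (V / (V + 1))) / 2"
        by (simp only: times_divide_eq_right divide_divide_eq_left mult.commute[of "V+1" 2])
      moreover have "(e * (V / (V + 1))) / 2 \<le> e / 2"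
        by (rule divide_right_mono) (use \<open>e * (V / (V + 1)) \<le> e\<close> in auto)
      ultimately have "e * V / (2 * (V + 1)) \<le> e / 2" by (simp only:)
      then show ?thesis by linarith
    qed
    finally show "R q \<le> R p + e" by simp
  qed
qed


lemma RS_neg:
  assumes "has_RS_integral f R a b I"
  shows "has_RS_integral (\<lambda>v. - f v) (\<lambda>v. - R v) a b I"
  using assms unfolding has_RS_integral_def by (simp add: algebra_simps)

lemma core:
  fixes R1 R2 f1 f2 :: "real \<Rightarrow> real"
  assumes t: "0 \<le> t" "t \<le> T" and m: "0 \<le> m"
    and R1c: "continuous_on {0..T} R1" and R2c: "continuous_on {0..T} R2"
    and BV1: "\<forall>n P. is_partition 0 T n P \<longrightarrow> (\<Sum>i<n. \<bar>R1 (P (Suc i)) - R1 (P i)\<bar>) \<le> V1"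
    and BV2: "\<forall>n P. is_partition 0 T n P \<longrightarrow> (\<Sum>i<n. \<bar>R2 (P (Suc i)) - R2 (P i)\<bar>) \<le> V2"
    and f1c: "continuous_on {0..T} f1" and f2c: "continuous_on {0..T} f2"
    and RS1: "\<forall>s s'. 0 \<le> s \<and> s \<le> s' \<and> s' \<le> T \<longrightarrow> (\<exists>I. has_RS_integral f1 R1 s s' I \<and> I \<le> 0)"
    and RS2: "\<forall>s s'. 0 \<le> s \<and> s \<le> s' \<and> s' \<le> T \<longrightarrow> (\<exists>I. has_RS_integral f2 R2 s s' I \<and> I \<le> 0)"
    and C: "\<forall>v\<in>{t..T}. (R1 T - R1 v) - (R2 T - R2 v) > m \<longrightarrow> 0 < f1 v \<and> f2 v < 0"
  shows "(R1 T - R1 t) - (R2 T - R2 t) \<le> m"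
proof (rule ccontr)
  define D where "D v = (R1 T - R1 v) - (R2 T - R2 v)" for v
  assume "\<not> (R1 T - R1 t) - (R2 T - R2 t) \<le> m"
  then have Dt: "m < D t" by (simp add: D_def)
  have Dc: "continuous_on {0..T} D"
    unfolding D_def by (intro continuous_intros R1c R2c)
  define S where "S = {t..T} \<inter> D -` {..m}"
  have TS: "T \<in> S" using t m by (simp add: S_def D_def)
  have clS: "closed S" unfolding S_def
    by (rule continuous_closed_preimage) (use continuous_on_subset[OF Dc] t in auto)
  have bS: "bdd_below S" unfolding S_def by (rule bdd_belowI[of _ t]) auto
  define \<tau> where "\<tau> = Inf S"
  have \<tau>S: "\<tau> \<in> S" unfolding \<tau>_def using closed_contains_Inf[OF _ bS clS] TS by blast
  have \<tau>lt: "m < D v" if "t \<le> v" "v < \<tau>" for v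
  proof (rule ccontr)
    assume "\<not> m < D v"
    then have "v \<in> S" using that \<tau>S by (auto simp: S_def)
    then have "\<tau> \<le> v" unfolding \<tau>_def using bS by (simp add: cInf_lower)
    then show False using that by simp
  qed
  have \<tau>b: "t \<le> \<tau>" "\<tau> \<le> T" "D \<tau> \<le> m" using \<tau>S by (auto simp: S_def)
  have "\<tau> \<in> {0..T}" using \<tau>b t by auto
  then obtain d where d: "0 < d" "\<forall>v\<in>{0..T}. dist v \<tau> < d \<longrightarrow> dist (D v) (D \<tau>) < D t - m"
    using Dc Dt unfolding continuous_on_iff by (metis diff_gt_0_iff_gt)
  define q where "q = max t (\<tau> - d / 2)"
  have q: "t \<le> q" "q < \<tau>" "q \<in> {0..T}" "dist q \<tau> < d"
  proof -
    have "t \<noteq> \<tau>" using Dt \<tau>b by auto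
    then have "t < \<tau>" using \<tau>b by simp
    then show "t \<le> q" "q < \<tau>" using d by (auto simp: q_def)
    then show "q \<in> {0..T}" "dist q \<tau> < d" using t \<tau>b d by (auto simp: q_def dist_real_def)
  qed
  have Dq: "D q < D t" using d(2) q(3,4) \<tau>b(3) by (auto simp: dist_real_def)
  have "D t \<le> D q"
  proof (cases "t = q")
    case True then show ?thesis by simp
  next
    case False
    then have tq: "t < q" using q by simp
    have pos: "0 < f1 v \<and> f2 v < 0" if "v \<in> {t..q}" for v
      using C \<tau>lt[of v] that q \<tau>b by (auto simp: D_def)
    have qT: "q \<le> T" using q by simp
    have "R1 q \<le> R1 t"
    proof (rule RS_mono[OF tq])
      show "continuous_on {t..q} f1" using continuous_on_subset[OF f1c] t qT by auto
      show "\<forall>v\<in>{t..q}. 0 < f1 v" using pos by blast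
      show "\<forall>n P. is_partition t q n P \<longrightarrow> (\<Sum>i<n. \<bar>R1 (P (Suc i)) - R1 (P i)\<bar>) \<le> V1"
        using part_ext[OF _ t(1) qT BV1] by blast
      show "\<forall>s s'. t \<le> s \<and> s < s' \<and> s' \<le> q \<longrightarrow> (\<exists>I. has_RS_integral f1 R1 s s' I \<and> I \<le> 0)"
        using RS1 t qT by auto
    qed
    moreover have "- R2 q \<le> - R2 t"
    proof (rule RS_mono[OF tq, where f="\<lambda>v. - f2 v" and R="\<lambda>v. - R2 v"])
      show "continuous_on {t..q} (\<lambda>v. - f2 v)"
        using continuous_on_subset[OF f2c] t qT by (auto intro!: continuous_intros)
      show "\<forall>v\<in>{t..q}. 0 < - f2 v" using pos by auto
      have BV2': "\<forall>n P. is_partition 0 T n P \<longrightarrow> (\<Sum>i<n. \<bar>- R2 (P (Suc i)) - - R2 (P i)\<bar>) \<le> V2"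
      proof (intro allI impI)
        fix n P assume "is_partition 0 T n P"
        then have "(\<Sum>i<n. \<bar>R2 (P (Suc i)) - R2 (P i)\<bar>) \<le> V2" using BV2 by blast
        moreover have "(\<Sum>i<n. \<bar>- R2 (P (Suc i)) - - R2 (P i)\<bar>) = (\<Sum>i<n. \<bar>R2 (P (Suc i)) - R2 (P i)\<bar>)"
          by (rule sum.cong) (auto simp: abs_minus_commute)
        ultimately show "(\<Sum>i<n. \<bar>- R2 (P (Suc i)) - - R2 (P i)\<bar>) \<le> V2" by simp
      qed
      show "\<forall>n P. is_partition t q n P \<longrightarrow> (\<Sum>i<n. \<bar>- R2 (P (Suc i)) - - R2 (P i)\<bar>) \<le> V2"
        using part_ext[OF _ t(1) qT BV2'] by blast
      show "\<forall>s s'. t \<le> s \<and> s < s' \<and> s' \<le> q \<longrightarrow> (\<exists>I. has_RS_integral (\<lambda>v. - f2 v) (\<lambda>v. - R2 v) s s' I \<and> I \<le> 0)"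
      proof (intro allI impI)
        fix s s' assume ss: "t \<le> s \<and> s < s' \<and> s' \<le> q"
        then have "0 \<le> s \<and> s \<le> s' \<and> s' \<le> T" using t qT by auto
        then obtain I where "has_RS_integral f2 R2 s s' I" "I \<le> 0" using RS2 by blast
        then show "\<exists>I. has_RS_integral (\<lambda>v. - f2 v) (\<lambda>v. - R2 v) s s' I \<and> I \<le> 0"
          using RS_neg by blast
      qed
    qed
    ultimately show ?thesis by (simp add: D_def)
  qed
  then show False using Dq by simp
qed



context
  fixes HH :: "('w \<Rightarrow> real) set" and E :: "('w \<Rightarrow> real) \<Rightarrow> real"
  assumes SE: "sublinear_expectation HH E"
begin

lemma SE_const: "(\<lambda>_. c) \<in> HH" and SE_add: "X \<in> HH \<Longrightarrow> Y \<in> HH \<Longrightarrow> (\<lambda>w. X w + Y w) \<in> HH"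
  and SE_scale: "X \<in> HH \<Longrightarrow> (\<lambda>w. a * X w) \<in> HH" and SE_abs: "X \<in> HH \<Longrightarrow> (\<lambda>w. \<bar>X w\<bar>) \<in> HH"
  and SE_mono: "X \<in> HH \<Longrightarrow> Y \<in> HH \<Longrightarrow> (\<And>w. X w \<le> Y w) \<Longrightarrow> E X \<le> E Y"
  and SE_Econst: "E (\<lambda>_. c) = c"
  and SE_subadd: "X \<in> HH \<Longrightarrow> Y \<in> HH \<Longrightarrow> E (\<lambda>w. X w + Y w) \<le> E X + E Y"
  and SE_homog: "X \<in> HH \<Longrightarrow> 0 \<le> a \<Longrightarrow> E (\<lambda>w. a * X w) = a * E X"
  using SE unfolding sublinear_expectation_def by blast+

lemma SE_minus: "X \<in> HH \<Longrightarrow> Y \<in> HH \<Longrightarrow> (\<lambda>w. X w - Y w) \<in> HH"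
proof -
  assume "X \<in> HH" "Y \<in> HH"
  then have "(\<lambda>w. X w + (-1) * Y w) \<in> HH" by (intro SE_add SE_scale)
  then show ?thesis by simp
qed

lemma SE_addc: "X \<in> HH \<Longrightarrow> (\<lambda>w. X w + c) \<in> HH"
  using SE_add[OF _ SE_const] by blast

lemma SE_transl: assumes "X \<in> HH" shows "E (\<lambda>w. X w + c) = E X + c"
proof -
  have "E (\<lambda>w. X w + c) \<le> E X + c" using SE_subadd[OF assms SE_const, of c] SE_Econst by simp
  moreover have "E X \<le> E (\<lambda>w. X w + c) - c"
  proof -
    have "E (\<lambda>w. (X w + c) + (- c)) \<le> E (\<lambda>w. X w + c) + E (\<lambda>_. - c)"
      by (rule SE_subadd[OF SE_addc[OF assms] SE_const])
    then show ?thesis using SE_Econst by simp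
  qed
  ultimately show ?thesis by simp
qed

lemma SE_diff_le: assumes "X \<in> HH" "Y \<in> HH" shows "E X - E Y \<le> E (\<lambda>w. \<bar>X w - Y w\<bar>)"
proof -
  have "E (\<lambda>w. (X w - Y w) + Y w) \<le> E (\<lambda>w. X w - Y w) + E Y"
    by (rule SE_subadd[OF SE_minus[OF assms] assms(2)])
  moreover have "E (\<lambda>w. X w - Y w) \<le> E (\<lambda>w. \<bar>X w - Y w\<bar>)"
    by (rule SE_mono) (use SE_minus SE_abs assms in auto)
  ultimately show ?thesis by simp
qed

lemma SE_abs_diff: assumes "X \<in> HH" "Y \<in> HH" shows "\<bar>E X - E Y\<bar> \<le> E (\<lambda>w. \<bar>X w - Y w\<bar>)"
  using SE_diff_le[OF assms] SE_diff_le[OF assms(2,1)] by (simp add: abs_minus_commute)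

end


context
  fixes HH :: "('w \<Rightarrow> real) set" and E :: "('w \<Rightarrow> real) \<Rightarrow> real"
    and T Ch cl cu :: real and l u :: "real \<Rightarrow> real" and h :: "real \<Rightarrow> 'w \<Rightarrow> real \<Rightarrow> real"
  assumes SE: "sublinear_expectation HH E"
    and ST: "standing_assms HH E T Ch cl cu l u h"
begin

lemma ST_cl: "0 < cl" using ST unfolding standing_assms_def by blast

lemma ST_mem: "t \<in> {0..T} \<Longrightarrow> X \<in> HH \<Longrightarrow> (\<lambda>w. h t w (X w)) \<in> HH"
  using ST unfolding standing_assms_def by blast

lemma ST_smono: "t \<in> {0..T} \<Longrightarrow> strict_mono (h t w)"
  using ST unfolding standing_assms_def by blast

lemma ST_lip: "t \<in> {0..T} \<Longrightarrow> cl * \<bar>y - y'\<bar> \<le> \<bar>h t w y - h t w y'\<bar> \<and> \<bar>h t w y - h t w y'\<bar> \<le> cu * \<bar>y - y'\<bar>"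
  using ST unfolding standing_assms_def by blast

lemma ST_cu: assumes "t \<in> {0..T}" shows "0 \<le> cu"
proof -
  have "\<bar>h t w 1 - h t w 0\<bar> \<le> cu * \<bar>1 - 0\<bar>" using ST_lip[OF assms] by blast
  then have "\<bar>h t w 1 - h t w 0\<bar> \<le> cu" by simp
  then show ?thesis using abs_ge_zero[of "h t w 1 - h t w 0"] by linarith
qed

lemma Hbar_mem: assumes "s \<in> {0..T}" "X \<in> HH"
  shows "(\<lambda>w. h s w (x + X w - E X)) \<in> HH"
proof -
  have "(\<lambda>w. X w + (x - E X)) \<in> HH" using SE_addc[OF SE assms(2)] by blast
  from ST_mem[OF assms(1) this] show ?thesis by (simp add: algebra_simps)
qed

lemma Hbar_lower: assumes s: "s \<in> {0..T}" and X: "X \<in> HH" and xx: "x \<le> x'"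
  shows "Hbar E h s x X + cl * (x' - x) \<le> Hbar E h s x' X"
proof -
  have pw: "h s w (x + X w - E X) + cl * (x' - x) \<le> h s w (x' + X w - E X)" for w
  proof -
    have m: "h s w (x + X w - E X) \<le> h s w (x' + X w - E X)"
      using strict_mono_less_eq[OF ST_smono[OF s]] xx by simp
    have "cl * \<bar>(x' + X w - E X) - (x + X w - E X)\<bar> \<le> \<bar>h s w (x' + X w - E X) - h s w (x + X w - E X)\<bar>"
      using ST_lip[OF s] by blast
    then show ?thesis using m xx by simp
  qed
  have "E (\<lambda>w. h s w (x + X w - E X) + cl * (x' - x)) = Hbar E h s x X + cl * (x' - x)"
    unfolding Hbar_def by (rule SE_transl[OF SE Hbar_mem[OF s X]])
  moreover have "E (\<lambda>w. h s w (x + X w - E X) + cl * (x' - x)) \<le> Hbar E h s x' X"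
    unfolding Hbar_def
    by (rule SE_mono[OF SE SE_addc[OF SE Hbar_mem[OF s X]] Hbar_mem[OF s X]]) (rule pw)
  ultimately show ?thesis by simp
qed

lemma Hbar_upper: assumes s: "s \<in> {0..T}" and X: "X \<in> HH"
  shows "\<bar>Hbar E h s x' X - Hbar E h s x X\<bar> \<le> cu * \<bar>x' - x\<bar>"
proof -
  have "\<bar>Hbar E h s x' X - Hbar E h s x X\<bar> \<le> E (\<lambda>w. \<bar>h s w (x' + X w - E X) - h s w (x + X w - E X)\<bar>)"
    unfolding Hbar_def by (rule SE_abs_diff[OF SE Hbar_mem[OF s X] Hbar_mem[OF s X]])
  also have "\<dots> \<le> E (\<lambda>_. cu * \<bar>x' - x\<bar>)"
  proof (rule SE_mono[OF SE])
    show "(\<lambda>w. \<bar>h s w (x' + X w - E X) - h s w (x + X w - E X)\<bar>) \<in> HH"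
      by (intro SE_abs[OF SE] SE_minus[OF SE] Hbar_mem[OF s X])
    show "(\<lambda>_. cu * \<bar>x' - x\<bar>) \<in> HH" by (rule SE_const[OF SE])
    fix w
    have "\<bar>h s w (x' + X w - E X) - h s w (x + X w - E X)\<bar> \<le> cu * \<bar>(x' + X w - E X) - (x + X w - E X)\<bar>"
      using ST_lip[OF s] by blast
    then show "\<bar>h s w (x' + X w - E X) - h s w (x + X w - E X)\<bar> \<le> cu * \<bar>x' - x\<bar>" by simp
  qed
  also have "\<dots> = cu * \<bar>x' - x\<bar>" by (rule SE_Econst[OF SE])
  finally show ?thesis .
qed

lemma Hbar_strict: assumes s: "s \<in> {0..T}" and X: "X \<in> HH" and xx: "x < x'"
  shows "Hbar E h s x X < Hbar E h s x' X"
proof -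
  have "0 < cl * (x' - x)" using xx ST_cl by simp
  then show ?thesis using Hbar_lower[OF s X, of x x'] xx by linarith
qed

lemma Hbar_lowlip: assumes s: "s \<in> {0..T}" and X: "X \<in> HH"
  shows "cl * \<bar>x - x'\<bar> \<le> \<bar>Hbar E h s x X - Hbar E h s x' X\<bar>"
proof (cases "x \<le> x'")
  case True
  have 1: "\<bar>x - x'\<bar> = x' - x" using True by simp
  have "cl * (x' - x) \<le> Hbar E h s x' X - Hbar E h s x X" using Hbar_lower[OF s X True] by linarith
  then show ?thesis unfolding 1 using abs_ge_minus_self[of "Hbar E h s x X - Hbar E h s x' X"] by linarith
next
  case False
  then have xx: "x' \<le> x" by simp
  have 1: "\<bar>x - x'\<bar> = x - x'" using xx by simp
  have "cl * (x - x') \<le> Hbar E h s x X - Hbar E h s x' X" using Hbar_lower[OF s X xx] by linarith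
  then show ?thesis unfolding 1 using abs_ge_self[of "Hbar E h s x X - Hbar E h s x' X"] by linarith
qed

lemma Hbar_cont: assumes s: "s \<in> {0..T}" and X: "X \<in> HH"
  shows "continuous_on A (\<lambda>x. Hbar E h s x X)"
  unfolding continuous_on_iff
proof (intro ballI allI impI)
  fix x e :: real assume e: "0 < e"
  have cu: "0 \<le> cu" by (rule ST_cu[OF s])
  show "\<exists>d>0. \<forall>x'\<in>A. dist x' x < d \<longrightarrow> dist (Hbar E h s x' X) (Hbar E h s x X) < e"
  proof (intro exI[of _ "e / (cu + 1)"] conjI ballI impI)
    show "0 < e / (cu + 1)" using e cu by simp
    fix x' assume "dist x' x < e / (cu + 1)"
    then have d: "\<bar>x' - x\<bar> * (cu + 1) < e" using cu by (simp add: dist_real_def field_simps)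
    have "\<bar>Hbar E h s x' X - Hbar E h s x X\<bar> \<le> cu * \<bar>x' - x\<bar>" by (rule Hbar_upper[OF s X])
    also have "\<dots> \<le> \<bar>x' - x\<bar> * (cu + 1)" by (simp add: algebra_simps)
    finally show "dist (Hbar E h s x' X) (Hbar E h s x X) < e" using d by (simp add: dist_real_def)
  qed
qed

lemma Linv_eq: assumes s: "s \<in> {0..T}" and X: "X \<in> HH"
  shows "Hbar E h s (Linv E h l' s X) X = l' s"
proof -
  define y where "y = l' s"
  define H0 where "H0 = Hbar E h s 0 X"
  define r where "r = \<bar>y - H0\<bar> / cl"
  have cl: "0 < cl" by (rule ST_cl)
  have r0: "0 \<le> r" using cl by (simp add: r_def)
  have "Hbar E h s (- r) X + cl * r \<le> H0"
    using Hbar_lower[OF s X, of "- r" 0] r0 by (simp add: H0_def)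
  moreover have clr: "cl * r = \<bar>y - H0\<bar>" using cl by (simp add: r_def)
  ultimately have a: "Hbar E h s (- r) X \<le> y" by linarith
  have "H0 + cl * r \<le> Hbar E h s r X"
    using Hbar_lower[OF s X, of 0 r] r0 by (simp add: H0_def)
  then have b: "y \<le> Hbar E h s r X" using clr by linarith
  obtain z where z: "- r \<le> z" "z \<le> r" "Hbar E h s z X = y"
    using IVT'[of "\<lambda>x. Hbar E h s x X", OF a b _ Hbar_cont[OF s X]] r0 by auto
  have ex1: "\<exists>!x. Hbar E h s x X = l' s"
  proof (rule ex1I[of _ z])
    show "Hbar E h s z X = l' s" using z y_def by simp
    fix x assume "Hbar E h s x X = l' s"
    then show "x = z" using z(3) Hbar_strict[OF s X, of x z] Hbar_strict[OF s X, of z x] y_def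
      by (metis linorder_neqE_linordered_idom order_less_irrefl)
  qed
  show ?thesis unfolding Linv_def by (rule theI'[OF ex1])
qed

lemma Hbar_X_lip: assumes s: "s \<in> {0..T}" and X: "X \<in> HH" and X': "X' \<in> HH"
  shows "\<bar>Hbar E h s x X - Hbar E h s x X'\<bar> \<le> 2 * cu * E (\<lambda>w. \<bar>X w - X' w\<bar>)"
proof -
  have cu: "0 \<le> cu" by (rule ST_cu[OF s])
  define e where "e = E (\<lambda>w. \<bar>X w - X' w\<bar>)"
  have XX: "(\<lambda>w. \<bar>X w - X' w\<bar>) \<in> HH" by (intro SE_abs[OF SE] SE_minus[OF SE] X X')
  have dE: "\<bar>E X - E X'\<bar> \<le> e" unfolding e_def by (rule SE_abs_diff[OF SE X X'])
  have "\<bar>Hbar E h s x X - Hbar E h s x X'\<bar> \<le> E (\<lambda>w. \<bar>h s w (x + X w - E X) - h s w (x + X' w - E X')\<bar>)"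
    unfolding Hbar_def by (rule SE_abs_diff[OF SE Hbar_mem[OF s X] Hbar_mem[OF s X']])
  also have "\<dots> \<le> E (\<lambda>w. cu * \<bar>X w - X' w\<bar> + cu * \<bar>E X - E X'\<bar>)"
  proof (rule SE_mono[OF SE])
    show "(\<lambda>w. \<bar>h s w (x + X w - E X) - h s w (x + X' w - E X')\<bar>) \<in> HH"
      by (intro SE_abs[OF SE] SE_minus[OF SE] Hbar_mem[OF s X] Hbar_mem[OF s X'])
    show "(\<lambda>w. cu * \<bar>X w - X' w\<bar> + cu * \<bar>E X - E X'\<bar>) \<in> HH"
      by (intro SE_addc[OF SE] SE_scale[OF SE] XX)
    fix w
    have "\<bar>h s w (x + X w - E X) - h s w (x + X' w - E X')\<bar> \<le> cu * \<bar>(x + X w - E X) - (x + X' w - E X')\<bar>"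
      using ST_lip[OF s] by blast
    also have "\<bar>(x + X w - E X) - (x + X' w - E X')\<bar> \<le> \<bar>X w - X' w\<bar> + \<bar>E X - E X'\<bar>" by simp
    then have "cu * \<bar>(x + X w - E X) - (x + X' w - E X')\<bar> \<le> cu * (\<bar>X w - X' w\<bar> + \<bar>E X - E X'\<bar>)"
      using cu by (rule mult_left_mono)
    finally show "\<bar>h s w (x + X w - E X) - h s w (x + X' w - E X')\<bar> \<le> cu * \<bar>X w - X' w\<bar> + cu * \<bar>E X - E X'\<bar>"
      by (simp add: algebra_simps)
  qed
  also have "\<dots> = cu * e + cu * \<bar>E X - E X'\<bar>"
    unfolding e_def by (simp add: SE_transl[OF SE SE_scale[OF SE XX]] SE_homog[OF SE XX cu])
  also have "\<dots> \<le> 2 * cu * e"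
  proof -
    have "cu * \<bar>E X - E X'\<bar> \<le> cu * e" using dE cu by (rule mult_left_mono)
    then show ?thesis by simp
  qed
  finally show ?thesis unfolding e_def .
qed

lemma Linv_lip: assumes s: "s \<in> {0..T}" and X: "X \<in> HH" and X': "X' \<in> HH"
  shows "\<bar>Linv E h l' s X - Linv E h l' s X'\<bar> \<le> 2 * cu / cl * E (\<lambda>w. \<bar>X w - X' w\<bar>)"
proof -
  define z where "z = Linv E h l' s X"
  define z' where "z' = Linv E h l' s X'"
  have cl: "0 < cl" by (rule ST_cl)
  have "cl * \<bar>z - z'\<bar> \<le> \<bar>Hbar E h s z X - Hbar E h s z' X\<bar>" by (rule Hbar_lowlip[OF s X])
  also have "Hbar E h s z X = Hbar E h s z' X'"
    unfolding z_def z'_def using Linv_eq[OF s X] Linv_eq[OF s X'] by simp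
  also have "\<bar>Hbar E h s z' X' - Hbar E h s z' X\<bar> \<le> 2 * cu * E (\<lambda>w. \<bar>X w - X' w\<bar>)"
    using Hbar_X_lip[OF s X X', of z'] by (simp add: abs_minus_commute)
  finally have "cl * \<bar>z - z'\<bar> \<le> 2 * cu * E (\<lambda>w. \<bar>X w - X' w\<bar>)" .
  then show ?thesis unfolding z_def[symmetric] z'_def[symmetric] using cl
    by (simp add: field_simps)
qed

end


lemma ST_uc: "standing_assms HH E T Ch cl cu l u h \<Longrightarrow> \<forall>\<epsilon>>0. \<exists>\<delta>>0. \<forall>w. \<forall>t\<in>{0..T}. \<forall>t'\<in>{0..T}. \<forall>y y'.
         \<bar>t - t'\<bar> < \<delta> \<and> \<bar>y - y'\<bar> < \<delta> \<longrightarrow> \<bar>h t w y - h t' w y'\<bar> < \<epsilon>"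
  unfolding standing_assms_def by blast

lemma ST_lcont: "standing_assms HH E T Ch cl cu l u h \<Longrightarrow> continuous_on {0..T} l \<and> continuous_on {0..T} u"
  unfolding standing_assms_def by blast

lemma Linv_cmp:
  assumes SE: "sublinear_expectation HH E"
    and ST1: "standing_assms HH E T Ch cl cu l1 u1 h1"
    and ST2: "standing_assms HH E T Ch cl cu l2 u2 h2"
    and s: "s \<in> {0..T}" and X: "X \<in> HH"
  shows "\<bar>Linv E h1 a s X - Linv E h2 b s X\<bar> \<le>
     1 / cl * (\<bar>Hbar E h1 s (Linv E h1 a s X) X - Hbar E h2 s (Linv E h1 a s X) X\<bar> + \<bar>a s - b s\<bar>)"
proof -
  define z where "z = Linv E h1 a s X"
  define z2 where "z2 = Linv E h2 b s X"
  have cl: "0 < cl" by (rule ST_cl[OF SE ST1])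
  have "cl * \<bar>z - z2\<bar> \<le> \<bar>Hbar E h2 s z X - Hbar E h2 s z2 X\<bar>" by (rule Hbar_lowlip[OF SE ST2 s X])
  also have "Hbar E h2 s z2 X = b s" unfolding z2_def by (rule Linv_eq[OF SE ST2 s X])
  also have "Hbar E h1 s z X = a s" unfolding z_def by (rule Linv_eq[OF SE ST1 s X])
  then have "\<bar>Hbar E h2 s z X - b s\<bar> \<le> \<bar>Hbar E h1 s z X - Hbar E h2 s z X\<bar> + \<bar>a s - b s\<bar>" by linarith
  finally have "cl * \<bar>z - z2\<bar> \<le> \<bar>Hbar E h1 s z X - Hbar E h2 s z X\<bar> + \<bar>a s - b s\<bar>" .
  then show ?thesis unfolding z_def[symmetric] z2_def[symmetric] using cl by (simp add: field_simps)
qed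

lemma g_cont:
  assumes SE: "sublinear_expectation HH E"
    and ST: "standing_assms HH E T Ch cl cu l u h"
    and Y: "C1G HH E T Y"
  shows "continuous_on {0..T} (\<lambda>v. E (\<lambda>w. h v w (Y v w)))"
  unfolding continuous_on_iff
proof (intro ballI allI impI)
  fix v e :: real assume v: "v \<in> {0..T}" and e: "0 < e"
  have cu: "0 \<le> cu" by (rule ST_cu[OF SE ST v])
  have YH: "\<And>v. v \<in> {0..T} \<Longrightarrow> Y v \<in> HH" using Y unfolding C1G_def by blast
  obtain d1 where d1: "0 < d1" "\<forall>w. \<forall>t\<in>{0..T}. \<forall>t'\<in>{0..T}. \<forall>y y'.
         \<bar>t - t'\<bar> < d1 \<and> \<bar>y - y'\<bar> < d1 \<longrightarrow> \<bar>h t w y - h t' w y'\<bar> < e / 2"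
    using ST_uc[OF ST] e by (meson half_gt_zero)
  have "0 < e / (2 * (cu + 1))" using e cu by simp
  then obtain d2 where d2: "0 < d2" "\<forall>v'\<in>{0..T}. \<bar>v' - v\<bar> < d2 \<longrightarrow> E (\<lambda>w. \<bar>Y v' w - Y v w\<bar>) < e / (2 * (cu + 1))"
    using Y v unfolding C1G_def by blast
  show "\<exists>d>0. \<forall>v'\<in>{0..T}. dist v' v < d \<longrightarrow> dist (E (\<lambda>w. h v' w (Y v' w))) (E (\<lambda>w. h v w (Y v w))) < e"
  proof (intro exI[of _ "min d1 d2"] conjI ballI impI)
    show "0 < min d1 d2" using d1 d2 by simp
    fix v' assume v': "v' \<in> {0..T}" and dv: "dist v' v < min d1 d2"
    have A': "(\<lambda>w. h v' w (Y v' w)) \<in> HH" by (rule ST_mem[OF SE ST v' YH[OF v']])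
    have A: "(\<lambda>w. h v w (Y v w)) \<in> HH" by (rule ST_mem[OF SE ST v YH[OF v]])
    have DY: "(\<lambda>w. \<bar>Y v' w - Y v w\<bar>) \<in> HH" by (intro SE_abs[OF SE] SE_minus[OF SE] YH v v')
    have "\<bar>E (\<lambda>w. h v' w (Y v' w)) - E (\<lambda>w. h v w (Y v w))\<bar> \<le> E (\<lambda>w. \<bar>h v' w (Y v' w) - h v w (Y v w)\<bar>)"
      by (rule SE_abs_diff[OF SE A' A])
    also have "\<dots> \<le> E (\<lambda>w. cu * \<bar>Y v' w - Y v w\<bar> + e / 2)"
    proof (rule SE_mono[OF SE])
      show "(\<lambda>w. \<bar>h v' w (Y v' w) - h v w (Y v w)\<bar>) \<in> HH" by (intro SE_abs[OF SE] SE_minus[OF SE] A A')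
      show "(\<lambda>w. cu * \<bar>Y v' w - Y v w\<bar> + e / 2) \<in> HH" by (intro SE_addc[OF SE] SE_scale[OF SE] DY)
      fix w
      have "\<bar>h v' w (Y v' w) - h v w (Y v' w)\<bar> < e / 2"
        using d1(2) v v' dv by (auto simp: dist_real_def)
      moreover have "\<bar>h v w (Y v' w) - h v w (Y v w)\<bar> \<le> cu * \<bar>Y v' w - Y v w\<bar>"
        using ST_lip[OF SE ST v] by blast
      ultimately show "\<bar>h v' w (Y v' w) - h v w (Y v w)\<bar> \<le> cu * \<bar>Y v' w - Y v w\<bar> + e / 2" by linarith
    qed
    also have "\<dots> = cu * E (\<lambda>w. \<bar>Y v' w - Y v w\<bar>) + e / 2"
      by (simp add: SE_transl[OF SE SE_scale[OF SE DY]] SE_homog[OF SE DY cu])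
    also have "\<dots> < e"
    proof -
      have lt: "E (\<lambda>w. \<bar>Y v' w - Y v w\<bar>) < e / (2 * (cu + 1))" using d2(2) v' dv by (auto simp: dist_real_def)
      have "cu * E (\<lambda>w. \<bar>Y v' w - Y v w\<bar>) \<le> cu * (e / (2 * (cu + 1)))" by (rule mult_left_mono) (use lt cu in auto)
      also have "cu * (e / (2 * (cu + 1))) < e / 2"
      proof -
        have "cu * e < (cu + 1) * e" using e by simp
        then show ?thesis using cu by (simp add: field_simps)
      qed
      finally show ?thesis by simp
    qed
    finally show "dist (E (\<lambda>w. h v' w (Y v' w))) (E (\<lambda>w. h v w (Y v w))) < e" by (simp add: dist_real_def)
  qed
qed

lemma barrier_le:
  assumes SE: "sublinear_expectation HH E" and ST: "standing_assms HH E T Ch cl cu l u h"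
    and s: "s \<in> {0..T}" and X: "X \<in> HH" and le: "l' s \<le> Hbar E h s z X"
  shows "Linv E h l' s X \<le> z"
proof (rule ccontr)
  assume "\<not> Linv E h l' s X \<le> z"
  then have "Hbar E h s z X < Hbar E h s (Linv E h l' s X) X" by (intro Hbar_strict[OF SE ST s X]) simp
  then show False using Linv_eq[OF SE ST s X, of l'] le by simp
qed

lemma barrier_ge:
  assumes SE: "sublinear_expectation HH E" and ST: "standing_assms HH E T Ch cl cu l u h"
    and s: "s \<in> {0..T}" and X: "X \<in> HH" and le: "Hbar E h s z X \<le> u' s"
  shows "z \<le> Linv E h u' s X"
proof (rule ccontr)
  assume "\<not> z \<le> Linv E h u' s X"
  then have "Hbar E h s (Linv E h u' s X) X < Hbar E h s z X" by (intro Hbar_strict[OF SE ST s X]) simp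
  then show False using Linv_eq[OF SE ST s X, of u'] le by simp
qed

lemma barrier_gt:
  assumes SE: "sublinear_expectation HH E" and ST: "standing_assms HH E T Ch cl cu l u h"
    and s: "s \<in> {0..T}" and X: "X \<in> HH" and lt: "Linv E h l' s X < z"
  shows "l' s < Hbar E h s z X"
  using Hbar_strict[OF SE ST s X lt] Linv_eq[OF SE ST s X, of l'] by simp

lemma barrier_lt:
  assumes SE: "sublinear_expectation HH E" and ST: "standing_assms HH E T Ch cl cu l u h"
    and s: "s \<in> {0..T}" and X: "X \<in> HH" and lt: "z < Linv E h u' s X"
  shows "Hbar E h s z X < u' s"
  using Hbar_strict[OF SE ST s X lt] Linv_eq[OF SE ST s X, of u'] by simp

lemma C_gen:
  assumes SE: "sublinear_expectation HH E"
    and STA: "standing_assms HH E T Ch cl cu lA uA hA"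
    and STB: "standing_assms HH E T Ch cl cu lB uB hB"
    and v: "v \<in> {0..T}" and XA: "XA \<in> HH" and XB: "XB \<in> HH"
    and gB: "lB v \<le> Hbar E hB v (E XB + kB) XB"
    and gA: "Hbar E hA v (E XA + kA) XA \<le> uA v"
    and da: "\<bar>(Linv E hA lA v XA - E XA) - (Linv E hB lB v XB - E XB)\<bar> \<le> m"
    and db: "\<bar>(Linv E hA uA v XA - E XA) - (Linv E hB uB v XB - E XB)\<bar> \<le> m"
    and k: "kA - kB > m"
  shows "lA v < Hbar E hA v (E XA + kA) XA \<and> Hbar E hB v (E XB + kB) XB < uB v"
proof
  have 1: "Linv E hB lB v XB \<le> E XB + kB" by (rule barrier_le[where l'=lB, OF SE STB v XB gB])
  have 2: "E XA + kA \<le> Linv E hA uA v XA" by (rule barrier_ge[where u'=uA, OF SE STA v XA gA])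
  have "Linv E hA lA v XA < E XA + kA" using 1 da k by linarith
  then show "lA v < Hbar E hA v (E XA + kA) XA" by (rule barrier_gt[where l'=lA, OF SE STA v XA])
  have "E XB + kB < Linv E hB uB v XB" using 2 db k by linarith
  then show "Hbar E hB v (E XB + kB) XB < uB v" by (rule barrier_lt[where u'=uB, OF SE STB v XB])
qed


theorem proposition3p10:
  fixes HH :: "('w \<Rightarrow> real) set" and E :: "('w \<Rightarrow> real) \<Rightarrow> real"
    and T Ch cl cu :: real
    and l1 u1 l2 u2 R1 R2 :: "real \<Rightarrow> real"
    and h1 h2 :: "real \<Rightarrow> 'w \<Rightarrow> real \<Rightarrow> real"
    and Ybar1 Ybar2 Y1 Y2 :: "real \<Rightarrow> 'w \<Rightarrow> real"
    and t :: real
  assumes "sublinear_expectation HH E"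
    and "0 < T"
    and "standing_assms HH E T Ch cl cu l1 u1 h1"
    and "standing_assms HH E T Ch cl cu l2 u2 h2"
    and "C1G HH E T Ybar1" and "C1G HH E T Ybar2"
    and "l1 T \<le> E (\<lambda>w. h1 T w (Ybar1 T w))" and "E (\<lambda>w. h1 T w (Ybar1 T w)) \<le> u1 T"
    and "l2 T \<le> E (\<lambda>w. h2 T w (Ybar2 T w))" and "E (\<lambda>w. h2 T w (Ybar2 T w)) \<le> u2 T"
    and "BSP_solution HH E T Ybar1 h1 l1 u1 Y1 R1"
    and "BSP_solution HH E T Ybar2 h2 l2 u2 Y2 R2"
    and "t \<in> {0..T}"
  shows "ereal \<bar>(R1 T - R1 t) - (R2 T - R2 t)\<bar> \<le>
      (SUP s\<in>{t..T}. ereal \<bar>E (Ybar1 s) - E (Ybar2 s)\<bar>)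
    + ereal (2 * cu / cl) * (SUP s\<in>{t..T}. ereal (E (\<lambda>w. \<bar>Ybar1 s w - Ybar2 s w\<bar>)))
    + ereal (1 / cl) *
        ((SUP s\<in>{t..T}. ereal (max
            \<bar>Hbar E h1 s (Linv E h1 l1 s (Ybar2 s)) (Ybar2 s) - Hbar E h2 s (Linv E h1 l1 s (Ybar2 s)) (Ybar2 s)\<bar>
            \<bar>Hbar E h1 s (Linv E h1 u1 s (Ybar2 s)) (Ybar2 s) - Hbar E h2 s (Linv E h1 u1 s (Ybar2 s)) (Ybar2 s)\<bar>))
       + (SUP s\<in>{t..T}. ereal (max \<bar>l1 s - l2 s\<bar> \<bar>u1 s - u2 s\<bar>)))"
proof -
  note SE = assms(1)
  note ST1 = assms(3) and ST2 = assms(4)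
  have tT: "0 \<le> t" "t \<le> T" using assms(13) by auto
  have Yb1H: "\<And>v. v \<in> {0..T} \<Longrightarrow> Ybar1 v \<in> HH" using assms(5) unfolding C1G_def by blast
  have Yb2H: "\<And>v. v \<in> {0..T} \<Longrightarrow> Ybar2 v \<in> HH" using assms(6) unfolding C1G_def by blast
  have Y1C: "C1G HH E T Y1" and R1C: "CTB T R1"
    and Y1eq: "\<And>v w. v \<in> {0..T} \<Longrightarrow> Y1 v w = Ybar1 v w + R1 T - R1 v"
    and g1b: "\<And>v. v \<in> {0..T} \<Longrightarrow> l1 v \<le> E (\<lambda>w. h1 v w (Y1 v w)) \<and> E (\<lambda>w. h1 v w (Y1 v w)) \<le> u1 v"
    and RS1l: "\<forall>s s'. 0 \<le> s \<and> s \<le> s' \<and> s' \<le> T \<longrightarrow> (\<exists>I. has_RS_integral (\<lambda>v. E (\<lambda>w. h1 v w (Y1 v w)) - l1 v) R1 s s' I \<and> I \<le> 0)"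
    and RS1u: "\<forall>s s'. 0 \<le> s \<and> s \<le> s' \<and> s' \<le> T \<longrightarrow> (\<exists>I. has_RS_integral (\<lambda>v. E (\<lambda>w. h1 v w (Y1 v w)) - u1 v) R1 s s' I \<and> I \<le> 0)"
    using assms(11) unfolding BSP_solution_def by blast+
  have Y2C: "C1G HH E T Y2" and R2C: "CTB T R2"
    and Y2eq: "\<And>v w. v \<in> {0..T} \<Longrightarrow> Y2 v w = Ybar2 v w + R2 T - R2 v"
    and g2b: "\<And>v. v \<in> {0..T} \<Longrightarrow> l2 v \<le> E (\<lambda>w. h2 v w (Y2 v w)) \<and> E (\<lambda>w. h2 v w (Y2 v w)) \<le> u2 v"
    and RS2l: "\<forall>s s'. 0 \<le> s \<and> s \<le> s' \<and> s' \<le> T \<longrightarrow> (\<exists>I. has_RS_integral (\<lambda>v. E (\<lambda>w. h2 v w (Y2 v w)) - l2 v) R2 s s' I \<and> I \<le> 0)"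
    and RS2u: "\<forall>s s'. 0 \<le> s \<and> s \<le> s' \<and> s' \<le> T \<longrightarrow> (\<exists>I. has_RS_integral (\<lambda>v. E (\<lambda>w. h2 v w (Y2 v w)) - u2 v) R2 s s' I \<and> I \<le> 0)"
    using assms(12) unfolding BSP_solution_def by blast+
  have R1c: "continuous_on {0..T} R1" using R1C unfolding CTB_def by blast
  have R2c: "continuous_on {0..T} R2" using R2C unfolding CTB_def by blast
  obtain V1 where BV1: "\<forall>n P. is_partition 0 T n P \<longrightarrow> (\<Sum>i<n. \<bar>R1 (P (Suc i)) - R1 (P i)\<bar>) \<le> V1"
    using R1C unfolding CTB_def bounded_variation_on_def by blast
  obtain V2 where BV2: "\<forall>n P. is_partition 0 T n P \<longrightarrow> (\<Sum>i<n. \<bar>R2 (P (Suc i)) - R2 (P i)\<bar>) \<le> V2"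
    using R2C unfolding CTB_def bounded_variation_on_def by blast
  have g1c: "continuous_on {0..T} (\<lambda>v. E (\<lambda>w. h1 v w (Y1 v w)))" by (rule g_cont[OF SE ST1 Y1C])
  have g2c: "continuous_on {0..T} (\<lambda>v. E (\<lambda>w. h2 v w (Y2 v w)))" by (rule g_cont[OF SE ST2 Y2C])
  have lu1c: "continuous_on {0..T} l1" "continuous_on {0..T} u1" using ST_lcont[OF ST1] by auto
  have lu2c: "continuous_on {0..T} l2" "continuous_on {0..T} u2" using ST_lcont[OF ST2] by auto
  have f1lc: "continuous_on {0..T} (\<lambda>v. E (\<lambda>w. h1 v w (Y1 v w)) - l1 v)"
    by (intro continuous_intros g1c lu1c)
  have f1uc: "continuous_on {0..T} (\<lambda>v. E (\<lambda>w. h1 v w (Y1 v w)) - u1 v)"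
    by (intro continuous_intros g1c lu1c)
  have f2lc: "continuous_on {0..T} (\<lambda>v. E (\<lambda>w. h2 v w (Y2 v w)) - l2 v)"
    by (intro continuous_intros g2c lu2c)
  have f2uc: "continuous_on {0..T} (\<lambda>v. E (\<lambda>w. h2 v w (Y2 v w)) - u2 v)"
    by (intro continuous_intros g2c lu2c)
  have g1H: "E (\<lambda>w. h1 v w (Y1 v w)) = Hbar E h1 v (E (Ybar1 v) + (R1 T - R1 v)) (Ybar1 v)"
    if v: "v \<in> {0..T}" for v
    unfolding Hbar_def by (intro arg_cong[where f=E] ext) (simp add: Y1eq[OF v] algebra_simps)
  have g2H: "E (\<lambda>w. h2 v w (Y2 v w)) = Hbar E h2 v (E (Ybar2 v) + (R2 T - R2 v)) (Ybar2 v)"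
    if v: "v \<in> {0..T}" for v
    unfolding Hbar_def by (intro arg_cong[where f=E] ext) (simp add: Y2eq[OF v] algebra_simps)
  define DD where "DD s = max
     \<bar>(Linv E h1 l1 s (Ybar1 s) - E (Ybar1 s)) - (Linv E h2 l2 s (Ybar2 s) - E (Ybar2 s))\<bar>
     \<bar>(Linv E h1 u1 s (Ybar1 s) - E (Ybar1 s)) - (Linv E h2 u2 s (Ybar2 s) - E (Ybar2 s))\<bar>" for s
  have keyK: "\<bar>(R1 T - R1 t) - (R2 T - R2 t)\<bar> \<le> m" if m0: "0 \<le> m" and mb: "\<forall>s\<in>{t..T}. DD s \<le> m" for m
  proof -
    have c1: "(R1 T - R1 t) - (R2 T - R2 t) \<le> m"
    proof (rule core[OF tT m0 R1c R2c BV1 BV2 f1lc f2uc RS1l RS2u])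
      show "\<forall>v\<in>{t..T}. m < (R1 T - R1 v) - (R2 T - R2 v) \<longrightarrow>
          0 < E (\<lambda>w. h1 v w (Y1 v w)) - l1 v \<and> E (\<lambda>w. h2 v w (Y2 v w)) - u2 v < 0"
      proof (intro ballI impI)
        fix v assume v: "v \<in> {t..T}" and k: "m < (R1 T - R1 v) - (R2 T - R2 v)"
        have v0: "v \<in> {0..T}" using v tT by auto
        have "DD v \<le> m" using mb v by blast
        then have da: "\<bar>(Linv E h1 l1 v (Ybar1 v) - E (Ybar1 v)) - (Linv E h2 l2 v (Ybar2 v) - E (Ybar2 v))\<bar> \<le> m"
          and db: "\<bar>(Linv E h1 u1 v (Ybar1 v) - E (Ybar1 v)) - (Linv E h2 u2 v (Ybar2 v) - E (Ybar2 v))\<bar> \<le> m"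
          unfolding DD_def by auto
        have "l1 v < Hbar E h1 v (E (Ybar1 v) + (R1 T - R1 v)) (Ybar1 v) \<and>
              Hbar E h2 v (E (Ybar2 v) + (R2 T - R2 v)) (Ybar2 v) < u2 v"
        proof (rule C_gen[OF SE ST1 ST2 v0 Yb1H[OF v0] Yb2H[OF v0] _ _ da db k])
          show "l2 v \<le> Hbar E h2 v (E (Ybar2 v) + (R2 T - R2 v)) (Ybar2 v)" using g2b[OF v0] g2H[OF v0] by simp
          show "Hbar E h1 v (E (Ybar1 v) + (R1 T - R1 v)) (Ybar1 v) \<le> u1 v" using g1b[OF v0] g1H[OF v0] by simp
        qed
        then show "0 < E (\<lambda>w. h1 v w (Y1 v w)) - l1 v \<and> E (\<lambda>w. h2 v w (Y2 v w)) - u2 v < 0"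
          using g1H[OF v0] g2H[OF v0] by simp
      qed
    qed
    have c2: "(R2 T - R2 t) - (R1 T - R1 t) \<le> m"
    proof (rule core[OF tT m0 R2c R1c BV2 BV1 f2lc f1uc RS2l RS1u])
      show "\<forall>v\<in>{t..T}. m < (R2 T - R2 v) - (R1 T - R1 v) \<longrightarrow>
          0 < E (\<lambda>w. h2 v w (Y2 v w)) - l2 v \<and> E (\<lambda>w. h1 v w (Y1 v w)) - u1 v < 0"
      proof (intro ballI impI)
        fix v assume v: "v \<in> {t..T}" and k: "m < (R2 T - R2 v) - (R1 T - R1 v)"
        have v0: "v \<in> {0..T}" using v tT by auto
        have "DD v \<le> m" using mb v by blast
        then have da: "\<bar>(Linv E h2 l2 v (Ybar2 v) - E (Ybar2 v)) - (Linv E h1 l1 v (Ybar1 v) - E (Ybar1 v))\<bar> \<le> m"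
          and db: "\<bar>(Linv E h2 u2 v (Ybar2 v) - E (Ybar2 v)) - (Linv E h1 u1 v (Ybar1 v) - E (Ybar1 v))\<bar> \<le> m"
          unfolding DD_def by (auto simp: abs_minus_commute)
        have "l2 v < Hbar E h2 v (E (Ybar2 v) + (R2 T - R2 v)) (Ybar2 v) \<and>
              Hbar E h1 v (E (Ybar1 v) + (R1 T - R1 v)) (Ybar1 v) < u1 v"
        proof (rule C_gen[OF SE ST2 ST1 v0 Yb2H[OF v0] Yb1H[OF v0] _ _ da db k])
          show "l1 v \<le> Hbar E h1 v (E (Ybar1 v) + (R1 T - R1 v)) (Ybar1 v)" using g1b[OF v0] g1H[OF v0] by simp
          show "Hbar E h2 v (E (Ybar2 v) + (R2 T - R2 v)) (Ybar2 v) \<le> u2 v" using g2b[OF v0] g2H[OF v0] by simp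
        qed
        then show "0 < E (\<lambda>w. h2 v w (Y2 v w)) - l2 v \<and> E (\<lambda>w. h1 v w (Y1 v w)) - u1 v < 0"
          using g1H[OF v0] g2H[OF v0] by simp
      qed
    qed
    from c1 c2 show ?thesis by linarith
  qed
  let ?A = "(SUP s\<in>{t..T}. ereal \<bar>E (Ybar1 s) - E (Ybar2 s)\<bar>)"
  let ?B = "(SUP s\<in>{t..T}. ereal (E (\<lambda>w. \<bar>Ybar1 s w - Ybar2 s w\<bar>)))"
  let ?C = "(SUP s\<in>{t..T}. ereal (max
            \<bar>Hbar E h1 s (Linv E h1 l1 s (Ybar2 s)) (Ybar2 s) - Hbar E h2 s (Linv E h1 l1 s (Ybar2 s)) (Ybar2 s)\<bar>
            \<bar>Hbar E h1 s (Linv E h1 u1 s (Ybar2 s)) (Ybar2 s) - Hbar E h2 s (Linv E h1 u1 s (Ybar2 s)) (Ybar2 s)\<bar>))"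
  let ?D = "(SUP s\<in>{t..T}. ereal (max \<bar>l1 s - l2 s\<bar> \<bar>u1 s - u2 s\<bar>))"
  let ?RHS = "?A + ereal (2 * cu / cl) * ?B + ereal (1 / cl) * (?C + ?D)"
  have cl: "0 < cl" by (rule ST_cl[OF SE ST1])
  have cu: "0 \<le> cu" using ST_cu[OF SE ST1, of T] assms(2) by simp
  have Dbound: "ereal (DD s) \<le> ?RHS" if s: "s \<in> {t..T}" for s
  proof -
    have s0: "s \<in> {0..T}" using s tT by auto
    define X1 where "X1 = Ybar1 s"
    define X2 where "X2 = Ybar2 s"
    have X1: "X1 \<in> HH" and X2: "X2 \<in> HH" using Yb1H[OF s0] Yb2H[OF s0] by (simp_all add: X1_def X2_def)
    define dE where "dE = \<bar>E X1 - E X2\<bar>"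
    define e where "e = E (\<lambda>w. \<bar>X1 w - X2 w\<bar>)"
    define HL where "HL = \<bar>Hbar E h1 s (Linv E h1 l1 s X2) X2 - Hbar E h2 s (Linv E h1 l1 s X2) X2\<bar>"
    define HU where "HU = \<bar>Hbar E h1 s (Linv E h1 u1 s X2) X2 - Hbar E h2 s (Linv E h1 u1 s X2) X2\<bar>"
    define dl where "dl = \<bar>l1 s - l2 s\<bar>"
    define du where "du = \<bar>u1 s - u2 s\<bar>"
    have la: "\<bar>Linv E h1 l1 s X1 - Linv E h1 l1 s X2\<bar> \<le> 2 * cu / cl * e"
      unfolding e_def by (rule Linv_lip[OF SE ST1 s0 X1 X2])
    have lb: "\<bar>Linv E h1 l1 s X2 - Linv E h2 l2 s X2\<bar> \<le> 1 / cl * (HL + dl)"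
      unfolding HL_def dl_def by (rule Linv_cmp[OF SE ST1 ST2 s0 X2])
    have ua: "\<bar>Linv E h1 u1 s X1 - Linv E h1 u1 s X2\<bar> \<le> 2 * cu / cl * e"
      unfolding e_def by (rule Linv_lip[OF SE ST1 s0 X1 X2])
    have ub: "\<bar>Linv E h1 u1 s X2 - Linv E h2 u2 s X2\<bar> \<le> 1 / cl * (HU + du)"
      unfolding HU_def du_def by (rule Linv_cmp[OF SE ST1 ST2 s0 X2])
    have icl: "0 \<le> 1 / cl" using cl by simp
    have m1: "1 / cl * (HL + dl) \<le> 1 / cl * (max HL HU + max dl du)"
      by (rule mult_left_mono[OF _ icl]) simp
    have m2: "1 / cl * (HU + du) \<le> 1 / cl * (max HL HU + max dl du)"
      by (rule mult_left_mono[OF _ icl]) simp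
    have "DD s \<le> dE + 2 * cu / cl * e + 1 / cl * (max HL HU + max dl du)"
      unfolding DD_def X1_def[symmetric] X2_def[symmetric] dE_def
      using la lb ua ub m1 m2 by (auto simp: abs_le_iff)
    moreover have "ereal dE + ereal (2 * cu / cl) * ereal e + ereal (1 / cl) * (ereal (max HL HU) + ereal (max dl du))
       = ereal (dE + 2 * cu / cl * e + 1 / cl * (max HL HU + max dl du))"
      by (simp only: plus_ereal.simps times_ereal.simps)
    ultimately have "ereal (DD s) \<le> ereal dE + ereal (2 * cu / cl) * ereal e + ereal (1 / cl) * (ereal (max HL HU) + ereal (max dl du))"
      by (simp only: ereal_less_eq)
    also have "\<dots> \<le> ?RHS"
    proof (intro add_mono ereal_mult_left_mono)
      show "ereal dE \<le> ?A" unfolding dE_def X1_def X2_def by (rule SUP_upper[OF s])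
      show "ereal e \<le> ?B" unfolding e_def X1_def X2_def by (rule SUP_upper[OF s])
      show "ereal (max HL HU) \<le> ?C" unfolding HL_def HU_def X2_def by (rule SUP_upper[OF s])
      show "ereal (max dl du) \<le> ?D" unfolding dl_def du_def by (rule SUP_upper[OF s])
      show "0 \<le> ereal (2 * cu / cl)" using cu cl by simp
      show "0 \<le> ereal (1 / cl)" using cl by simp
    qed
    finally show ?thesis .
  qed
  define RR where "RR = ?RHS"
  have DbR: "ereal (DD s) \<le> RR" if s: "s \<in> {t..T}" for s
    unfolding RR_def by (rule Dbound[OF s])
  have "ereal \<bar>(R1 T - R1 t) - (R2 T - R2 t)\<bar> \<le> RR"
  proof (cases RR)
    case PInf
    then show ?thesis by simp
  next
    case MInf
    have "ereal (DD t) \<le> RR" using DbR tT by auto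
    then show ?thesis using MInf by simp
  next
    case (real m)
    have mb: "\<forall>s\<in>{t..T}. DD s \<le> m" using DbR real by auto
    have "0 \<le> DD t" by (simp add: DD_def)
    moreover have "DD t \<le> m" using mb tT by simp
    ultimately have "0 \<le> m" by linarith
    from keyK[OF this mb] real show ?thesis by simp
  qed
  then show ?thesis unfolding RR_def .
qed

end
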